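(* There exists $n_0$ such that for every $n\ge n_0$, \[\mathrm{ex}(n,T_1,C_4)=\mathcal{N}(T_1,F(n))=\begin{cases}\binom{n}{2}-\frac{3(n-1)}{2} & \text{if } n \text{ is odd},\\[2pt] \binom{n}{2}-2n+3 & \text{if } n \text{ is even}.\end{cases}\]
   Context: $T_1$ (the paw) is the graph on $4$ vertices consisting of a triangle and one further vertex joined to exactly one vertex of the triangle. $C_4$ is the cycle on $4$ vertices. $F(n)$ is the friendship graph on $n$ vertices: it has a vertex $v$ of degree $n-1$, and on the remaining $n-1$ vertices a matching with $\lfloor (n-1)/2\rfloor$ edges (and no other edges). For graphs $H,G$, $\mathcal{N}(H,G)$ is the number of subgraphs of $G$ isomorphic to $H$, and $\mathrm{ex}(n,H,F)$ is the maximum of $\mathcal{N}(H,G)$ over $F$-free graphs $G$ on $n$ vertices. *)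

theory Defs
  imports Main
begin

type_synonym 'a graph = "'a set \<times> 'a set set"

definition simple_graph :: "'a graph \<Rightarrow> bool" where
  "simple_graph G \<longleftrightarrow> finite (fst G) \<and>
     (\<forall>e\<in>snd G. \<exists>u v. e = {u, v} \<and> u \<noteq> v \<and> u \<in> fst G \<and> v \<in> fst G)"

definition graph_iso :: "'a graph \<Rightarrow> 'b graph \<Rightarrow> bool" where
  "graph_iso H G \<longleftrightarrow> (\<exists>f. bij_betw f (fst H) (fst G) \<and> (\<lambda>e. f ` e) ` snd H = snd G)"

definition subgraphs :: "'a graph \<Rightarrow> 'a graph set" where
  "subgraphs G = {(V', E'). V' \<subseteq> fst G \<and> E' \<subseteq> snd G \<and> (\<forall>e\<in>E'. e \<subseteq> V')}"

definition count_sub :: "'b graph \<Rightarrow> 'a graph \<Rightarrow> nat" where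
  "count_sub H G = card {S \<in> subgraphs G. graph_iso H S}"

text \<open>Graphs on n vertices (vertex set fixed to {0..<n}; isomorphism invariant).\<close>
definition graphs_on :: "nat \<Rightarrow> nat graph set" where
  "graphs_on n = {G. fst G = {0..<n} \<and> simple_graph G}"

definition free :: "'b graph \<Rightarrow> 'a graph \<Rightarrow> bool" where
  "free F G \<longleftrightarrow> count_sub F G = 0"

definition ex_gen :: "nat \<Rightarrow> 'a graph \<Rightarrow> 'b graph \<Rightarrow> nat" where
  "ex_gen n H F = Max {count_sub H G | G. G \<in> graphs_on n \<and> free F G}"

text \<open>The paw T_1: triangle 0,1,2 plus vertex 3 joined to 2.\<close>
definition paw :: "nat graph" where
  "paw = ({0,1,2,3}, {{0,1},{1,2},{0,2},{2,3}})"

definition C4 :: "nat graph" where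
  "C4 = ({0,1,2,3}, {{0,1},{1,2},{2,3},{3,0}})"

definition friendship :: "nat \<Rightarrow> nat graph" where
  "friendship n = ({0..<n},
     {{0, v} | v. 1 \<le> v \<and> v < n} \<union>
     {{2*i - 1, 2*i} | i. 1 \<le> i \<and> i \<le> (n - 1) div 2})"

end

theory Submission
  imports Defs
begin

lemma arith_final:
 fixes D m al b2 cv k L q S2 SD OC ones n :: nat
 assumes h1: "q = m*(D-2) + S2" and h2: "S2 + SD \<le> OC + ones" and h3: "D + m + 2*al + b2 \<le> SD"
   and h4: "OC \<le> 2*m + 2*al + 2*cv + k*k" and h5: "ones \<le> D - m + k" and h6: "cv \<le> al + b2"
   and h7: "cv \<le> D*k" and h8: "al \<le> k" and h9: "b2 \<le> k*k" and h10: "m \<le> D" and h11: "m = 2*L"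
   and h12: "n = 1 + D + k" and h13: "D \<ge> 8"
 shows "q \<le> 2*((n-1) div 2)*(n-3)"
proof -
  define h where "h = 2*((n-1) div 2)"
  have S2n: "S2 + b2 \<le> 2 * cv + k * k + k"
    using h2 h3 h4 h5 h10 by linarith
  have mD: "m * (D-2) \<le> D * (D - 2)" using h10 by (rule mult_right_mono) simp
  have n3: "n - 3 = D + k - 2" using h12 h13 by simp
  have hh: "h \<ge> D + k - 1" unfolding h_def using h12 by linarith
  have "q \<le> h * (n-3)"
  proof (cases "k = 0")
    case True
    then have "cv = 0" "b2 = 0" using h7 h9 by auto
    then have "q \<le> m * (D - 2)" using h1 S2n True by simp
    moreover have "m \<le> h" unfolding h_def using True h12 h10 h11 by simp
    ultimately show ?thesis using n3 True
      by (metis add_0_right le_trans mult_right_mono zero_le)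
  next
    case False
    show ?thesis
    proof (cases "k = 1")
      case True
      then have "b2 \<le> 1" "al \<le> 1" using h9 h8 by auto
      moreover have "S2 + b2 \<le> 2 * cv + 2" using S2n True by simp
      ultimately have "S2 \<le> 5" using h6 by linarith
      then have "q \<le> D * (D - 2) + 5" using h1 mD by linarith
      moreover have "h * (n-3) \<ge> D * (D - 1)"
      proof -
        have "n - 3 = D - 1" using n3 True by simp
        moreover have "D \<le> h" using hh True by simp
        ultimately show ?thesis by (simp add: mult_right_mono)
      qed
      moreover have "D * (D - 1) = D * (D - 2) + D"
      proof -
        obtain E where "D = E + 2" using h13 le_Suc_ex[of 2 D] by auto
        thus ?thesis by (simp add: algebra_simps)
      qed
      ultimately show ?thesis using h13 by linarith
    next
      case False
      then have k2: "k \<ge> 2" using \<open>k \<noteq> 0\<close> by simp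
      have "S2 \<le> D * k + k * k + 2 * k" using S2n h6 h7 h8 by linarith
      then have qb: "q \<le> D * (D - 2) + D * k + k * k + 2 * k" using h1 mD by linarith
      have hb: "h * (n-3) \<ge> (D + k - 1) * (D + k - 2)"
        using hh n3 by (simp add: mult_right_mono)
      have m5: "(D - 5) * (k - 1) \<ge> 3 * 1" using k2 h13 by (intro mult_mono) auto
      have "int ((D + k - 1) * (D + k - 2)) = (int D + int k - 1) * (int D + int k - 2)"
        using h13 by (simp add: of_nat_diff)
      moreover have "int (D * (D - 2) + D * k + k * k + 2 * k) = int D * (int D - 2) + int D * int k + int k * int k + 2 * int k"
        using h13 by (simp add: of_nat_diff)
      moreover have "int ((D - 5) * (k - 1)) = (int D - 5) * (int k - 1)"
        using h13 k2 by (simp add: of_nat_diff)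
      moreover have "(int D + int k - 1) * (int D + int k - 2) = int D * (int D - 2) + int D * int k + int k * int k + 2 * int k + ((int D - 5) * (int k - 1) - 3)"
        by (simp add: algebra_simps)
      ultimately have "D * (D - 2) + D * k + k * k + 2 * k \<le> (D + k - 1) * (D + k - 2)"
        using m5 by linarith
      then show ?thesis using qb hb by linarith
    qed
  qed
  thus ?thesis unfolding h_def by simp
qed

locale c4free =
  fixes V :: "nat set" and adj :: "nat \<Rightarrow> nat \<Rightarrow> bool"
  assumes finV: "finite V"
  and adjV: "\<And>u v. adj u v \<Longrightarrow> u \<in> V \<and> v \<in> V"
  and sym: "\<And>u v. adj u v \<Longrightarrow> adj v u"
  and irr: "\<And>u. \<not> adj u u"
  and c4: "\<And>a b c d. adj a b \<Longrightarrow> adj b c \<Longrightarrow> adj c d \<Longrightarrow> adj d a \<Longrightarrow> a \<noteq> c \<Longrightarrow> b \<noteq> d \<Longrightarrow> False"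
begin

lemma F1: "adj u c \<Longrightarrow> adj w c \<Longrightarrow> adj u c' \<Longrightarrow> adj w c' \<Longrightarrow> u \<noteq> w \<Longrightarrow> c = c'"
  using c4[of u c w c'] sym by blast

definition N where "N c = {v. adj c v}"
abbreviation d where "d c \<equiv> card (N c)"

lemma N_sub: "N c \<subseteq> V" using adjV by (auto simp: N_def)
lemma fin_N: "finite (N c)" using N_sub finV finite_subset by blast

definition Q2 where "Q2 = {(a,b,c,e). adj a b \<and> adj b c \<and> adj a c \<and> adj c e \<and> e \<noteq> a \<and> e \<noteq> b}"
definition Q2c where "Q2c c = {(a,b,e). adj c a \<and> adj c b \<and> adj c e \<and> adj a b \<and> e \<noteq> a \<and> e \<noteq> b}"
definition Mc where "Mc c = {(a,b). adj c a \<and> adj c b \<and> adj a b}"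

lemma fin_Q2c: "finite (Q2c c)"
proof -
  have "Q2c c \<subseteq> N c \<times> N c \<times> N c" by (auto simp: Q2c_def N_def)
  thus ?thesis using fin_N finite_subset by blast
qed

lemma card_Q2: "card Q2 = (\<Sum>c\<in>V. card (Q2c c))"
proof -
  have "Q2 = (\<lambda>(c,(a,b,e)). (a,b,c,e)) ` (Sigma V Q2c)"
    using adjV sym by (auto simp: Q2_def Q2c_def image_iff)
  moreover have "inj_on (\<lambda>(c,(a,b,e)). (a,b,c,e)) (Sigma V Q2c)"
    by (auto simp: inj_on_def)
  ultimately have "card Q2 = card (Sigma V Q2c)" by (simp add: card_image)
  also have "\<dots> = (\<Sum>c\<in>V. card (Q2c c))" using finV fin_Q2c by (simp add: card_SigmaI)
  finally show ?thesis .
qed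

lemma fin_Mc: "finite (Mc c)"
proof -
  have "Mc c \<subseteq> N c \<times> N c" by (auto simp: Mc_def N_def)
  thus ?thesis using fin_N finite_subset by blast
qed

lemma card_Q2c: "card (Q2c c) = card (Mc c) * (d c - 2)"
proof -
  have "Q2c c = (\<lambda>((a,b),e). (a,b,e)) ` (Sigma (Mc c) (\<lambda>(a,b). N c - {a,b}))"
    by (auto simp: Q2c_def Mc_def N_def image_iff)
  moreover have "inj_on (\<lambda>((a,b),e). (a,b,e)) (Sigma (Mc c) (\<lambda>(a,b). N c - {a,b}))"
    by (auto simp: inj_on_def)
  ultimately have "card (Q2c c) = card (Sigma (Mc c) (\<lambda>(a,b). N c - {a,b}))" by (simp add: card_image)
  also have "\<dots> = (\<Sum>p\<in>Mc c. card ((\<lambda>(a,b). N c - {a,b}) p))"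
    using fin_Mc fin_N by (intro card_SigmaI) auto
  also have "\<dots> = (\<Sum>p\<in>Mc c. d c - 2)"
  proof (rule sum.cong)
    fix p assume "p \<in> Mc c"
    then obtain a b where p: "p = (a,b)" "a \<in> N c" "b \<in> N c" "a \<noteq> b"
      using irr by (cases p) (auto simp: Mc_def N_def)
    thus "card ((\<lambda>(a,b). N c - {a,b}) p) = d c - 2"
      using fin_N by (simp add: card_Diff_subset)
  qed simp
  finally show ?thesis by simp
qed

lemma inj_fst_Mc: "inj_on fst (Mc c)"
proof (rule inj_onI)
  fix p q assume "p \<in> Mc c" "q \<in> Mc c" "fst p = fst q"
  then obtain a b b' where "p = (a,b)" "q = (a,b')" "adj c a" "adj c b" "adj a b" "adj c b'" "adj a b'"
    by (auto simp: Mc_def)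
  moreover have "b = b'"
  proof (rule ccontr)
    assume "b \<noteq> b'"
    thus False using F1[of b a b' c] calculation sym irr by metis
  qed
  ultimately show "p = q" by simp
qed

lemma card_Mc: "card (Mc c) \<le> d c"
proof -
  have "card (Mc c) = card (fst ` Mc c)" using inj_fst_Mc by (simp add: card_image)
  also have "\<dots> \<le> d c" using fin_N by (intro card_mono) (auto simp: Mc_def N_def)
  finally show ?thesis .
qed

lemma per_vertex: "card (Q2c c) + d c \<le> d c * (d c - 1) + (if d c = 1 then 1 else 0)"
proof -
  have "card (Q2c c) \<le> d c * (d c - 2)" using card_Q2c card_Mc by (simp add: mult_le_mono1)
  moreover have "d c * (d c - 2) + d c \<le> d c * (d c - 1) + (if d c = 1 then 1 else 0)"
  proof (cases "d c")
    case 0 then show ?thesis by simp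
  next
    case (Suc m) then show ?thesis by (cases m) (auto simp: algebra_simps)
  qed
  ultimately show ?thesis by linarith
qed


definition Bs where "Bs x = V - N x - {x}"
definition ABe where "ABe x = {(a,w). a \<in> N x \<and> w \<in> Bs x \<and> adj a w}"
definition BBe where "BBe x = {(v,w). v \<in> Bs x \<and> w \<in> Bs x \<and> adj v w}"
definition Cov where "Cov x = {(a,w). a \<in> N x \<and> w \<in> Bs x \<and> (\<exists>v. adj a v \<and> adj v w)}"

lemma Bs_D: "w \<in> Bs x \<Longrightarrow> w \<in> V \<and> \<not> adj x w \<and> w \<noteq> x"
  by (auto simp: Bs_def N_def)

lemma fin_Bs: "finite (Bs x)" using finV by (auto simp: Bs_def)

lemma partition: assumes "x \<in> V" shows "card V = 1 + d x + card (Bs x)"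
proof -
  have "V = insert x (N x \<union> Bs x)" using assms N_sub by (auto simp: Bs_def)
  moreover have "x \<notin> N x \<union> Bs x" using irr by (auto simp: Bs_def N_def)
  moreover have "N x \<inter> Bs x = {}" by (auto simp: Bs_def)
  moreover have "card (N x \<union> Bs x) = d x + card (Bs x)"
    using fin_N fin_Bs \<open>N x \<inter> Bs x = {}\<close> by (rule card_Un_disjoint)
  moreover have "card (insert x (N x \<union> Bs x)) = Suc (card (N x \<union> Bs x))"
    using fin_N fin_Bs \<open>x \<notin> N x \<union> Bs x\<close> by (intro card_insert_disjoint) auto
  ultimately show ?thesis by simp
qed

lemma fin_ABe: "finite (ABe x)"
proof -
  have "ABe x \<subseteq> N x \<times> Bs x" by (auto simp: ABe_def)
  thus ?thesis using fin_N fin_Bs finite_subset by blast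
qed

lemma fin_BBe: "finite (BBe x)"
proof -
  have "BBe x \<subseteq> Bs x \<times> Bs x" by (auto simp: BBe_def)
  thus ?thesis using fin_Bs finite_subset by blast
qed

lemma fin_Cov: "finite (Cov x)"
proof -
  have "Cov x \<subseteq> N x \<times> Bs x" by (auto simp: Cov_def)
  thus ?thesis using fin_N fin_Bs finite_subset by blast
qed

lemma two_A_nbrs: "a \<in> N x \<Longrightarrow> a' \<in> N x \<Longrightarrow> adj a v \<Longrightarrow> adj a' v \<Longrightarrow> v \<noteq> x \<Longrightarrow> a = a'"
  using F1[of a x a' v] sym by (auto simp: N_def)

lemma inj_snd_ABe: "inj_on snd (ABe x)"
proof (rule inj_onI)
  fix p q assume "p \<in> ABe x" "q \<in> ABe x" "snd p = snd q"
  then obtain a a' w where "p = (a,w)" "q = (a',w)" "a \<in> N x" "a' \<in> N x" "adj a w" "adj a' w" "w \<in> Bs x"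
    by (auto simp: ABe_def)
  moreover then have "w \<noteq> x" using Bs_D by blast
  ultimately show "p = q" using two_A_nbrs by blast
qed

lemma al_k: "card (ABe x) \<le> card (Bs x)"
proof -
  have "card (ABe x) = card (snd ` ABe x)" using inj_snd_ABe by (simp add: card_image)
  also have "\<dots> \<le> card (Bs x)" using fin_Bs by (intro card_mono) (auto simp: ABe_def)
  finally show ?thesis .
qed

lemma b2_k: "card (BBe x) \<le> card (Bs x) * card (Bs x)"
proof -
  have "card (BBe x) \<le> card (Bs x \<times> Bs x)" using fin_Bs by (intro card_mono) (auto simp: BBe_def)
  thus ?thesis by (simp add: card_cartesian_product)
qed

lemma cov_Dk: "card (Cov x) \<le> d x * card (Bs x)"
proof -
  have "card (Cov x) \<le> card (N x \<times> Bs x)" using fin_Bs fin_N by (intro card_mono) (auto simp: Cov_def)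
  thus ?thesis by (simp add: card_cartesian_product)
qed

lemma cov_ab: "card (Cov x) \<le> card (ABe x) + card (BBe x)"
proof -
  define h where "h = (\<lambda>(a,w). (SOME v. adj a v \<and> adj v w, w))"
  have hP: "adj a (fst (h (a,w))) \<and> adj (fst (h (a,w))) w \<and> snd (h (a,w)) = w" if "(a,w) \<in> Cov x" for a w
  proof -
    from that have "\<exists>v. adj a v \<and> adj v w" by (auto simp: Cov_def)
    then have "adj a (SOME v. adj a v \<and> adj v w) \<and> adj (SOME v. adj a v \<and> adj v w) w" by (rule someI_ex)
    thus ?thesis unfolding h_def by simp
  qed
  have "inj_on h (Cov x)"
  proof (rule inj_onI)
    fix p q assume p: "p \<in> Cov x" and q: "q \<in> Cov x" and e: "h p = h q"
    obtain a w where pp: "p = (a,w)" by (cases p)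
    obtain a' w' where qq: "q = (a',w')" by (cases q)
    have "w = w'" using hP[of a w] hP[of a' w'] p q e pp qq by auto
    moreover have "a = a'"
    proof (rule two_A_nbrs)
      show "a \<in> N x" "a' \<in> N x" using p q pp qq by (auto simp: Cov_def)
      show "adj a (fst (h p))" using hP[of a w] p pp by auto
      show "adj a' (fst (h p))" using hP[of a' w'] q qq e by auto
      have "w \<in> Bs x" using p pp by (auto simp: Cov_def)
      moreover have "adj (fst (h p)) w" using hP[of a w] p pp by auto
      ultimately show "fst (h p) \<noteq> x" using Bs_D by blast
    qed
    ultimately show "p = q" using pp qq by simp
  qed
  moreover have "h ` Cov x \<subseteq> ABe x \<union> BBe x"
  proof
    fix r assume "r \<in> h ` Cov x"
    then obtain a w where aw: "(a,w) \<in> Cov x" "r = h (a,w)" by auto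
    define v where "v = fst r"
    have r: "r = (v, w)" using hP[OF aw(1)] aw(2) v_def by (metis prod.collapse)
    have av: "adj a v" "adj v w" using hP[OF aw(1)] aw(2) v_def by auto
    have a: "a \<in> N x" and w: "w \<in> Bs x" using aw by (auto simp: Cov_def)
    have "v \<noteq> x" using av w Bs_D by blast
    moreover have "v \<in> V" using av adjV by blast
    ultimately have "v \<in> N x \<or> v \<in> Bs x" by (auto simp: Bs_def)
    thus "r \<in> ABe x \<union> BBe x" using r av w by (auto simp: ABe_def BBe_def)
  qed
  ultimately have "card (Cov x) \<le> card (ABe x \<union> BBe x)"
    using fin_ABe fin_BBe by (metis card_image card_mono finite_UnI)
  also have "\<dots> \<le> card (ABe x) + card (BBe x)" by (rule card_Un_le)
  finally show ?thesis .
qed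

lemma m_even: "\<exists>L. card (Mc x) = 2 * L"
proof -
  define L where "L = {p \<in> Mc x. fst p < snd p}"
  have "Mc x = L \<union> prod.swap ` L"
  proof
    show "Mc x \<subseteq> L \<union> prod.swap ` L"
    proof
      fix p assume p: "p \<in> Mc x"
      obtain a b where ab: "p = (a,b)" by (cases p)
      have "a \<noteq> b" using p ab irr by (auto simp: Mc_def)
      then show "p \<in> L \<union> prod.swap ` L"
      proof (cases "a < b")
        case True thus ?thesis using p ab by (auto simp: L_def)
      next
        case False
        then have "(b,a) \<in> L" using p ab sym \<open>a \<noteq> b\<close> by (auto simp: L_def Mc_def)
        moreover have "(a,b) = prod.swap (b,a)" by simp
        ultimately show ?thesis using ab by blast
      qed
    qed
    show "L \<union> prod.swap ` L \<subseteq> Mc x" using sym by (auto simp: L_def Mc_def)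
  qed
  moreover have "L \<inter> prod.swap ` L = {}" by (auto simp: L_def)
  moreover have "finite L" using fin_Mc by (auto simp: L_def)
  moreover have "card (prod.swap ` L) = card L" by (simp add: card_image)
  ultimately have "card (Mc x) = 2 * card L" by (metis card_Un_disjoint finite_imageI mult_2)
  thus ?thesis by blast
qed

lemma SD_bound: assumes xV: "x \<in> V"
  shows "d x + card (Mc x) + 2 * card (ABe x) + card (BBe x) \<le> (\<Sum>c\<in>V-{x}. d c)"
proof -
  define E1 where "E1 = N x \<times> {x}"
  define E4 where "E4 = prod.swap ` ABe x"
  have fE1: "finite E1" using fin_N by (simp add: E1_def)
  have fE4: "finite E4" using fin_ABe by (simp add: E4_def)
  have cE1: "card E1 = d x" by (simp add: E1_def card_cartesian_product)
  have cE4: "card E4 = card (ABe x)" by (simp add: E4_def card_image)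
  have d12: "E1 \<inter> Mc x = {}" using irr by (auto simp: E1_def Mc_def)
  have d3: "(E1 \<union> Mc x) \<inter> ABe x = {}" using Bs_D by (fastforce simp: E1_def Mc_def ABe_def N_def)
  have d4: "(E1 \<union> Mc x \<union> ABe x) \<inter> E4 = {}" using Bs_D by (fastforce simp: E1_def E4_def Mc_def ABe_def N_def)
  have d5: "(E1 \<union> Mc x \<union> ABe x \<union> E4) \<inter> BBe x = {}" using Bs_D by (fastforce simp: E1_def E4_def Mc_def ABe_def BBe_def N_def)
  have "card (E1 \<union> Mc x \<union> ABe x \<union> E4 \<union> BBe x) = d x + card (Mc x) + 2 * card (ABe x) + card (BBe x)"
    using fE1 fE4 fin_Mc fin_ABe fin_BBe d12 d3 d4 d5 cE1 cE4 by (simp add: card_Un_disjoint)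
  moreover have "E1 \<union> Mc x \<union> ABe x \<union> E4 \<union> BBe x \<subseteq> Sigma (V - {x}) N"
    using sym irr adjV Bs_D by (fastforce simp: E1_def E4_def Mc_def ABe_def BBe_def N_def)
  moreover have "finite (Sigma (V - {x}) N)" using finV fin_N by auto
  ultimately have "d x + card (Mc x) + 2 * card (ABe x) + card (BBe x) \<le> card (Sigma (V - {x}) N)"
    by (metis card_mono)
  also have "\<dots> = (\<Sum>c\<in>V-{x}. d c)" using finV fin_N by (simp add: card_SigmaI)
  finally show ?thesis .
qed


lemma offdiag_card: assumes "finite S" shows "card {(u,w). u \<in> S \<and> w \<in> S \<and> u \<noteq> w} = card S * (card S - 1)"
proof -
  define Off where "Off = {(u,w). u \<in> S \<and> w \<in> S \<and> u \<noteq> w}"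
  have "S \<times> S = Off \<union> (\<lambda>u. (u,u)) ` S" by (auto simp: Off_def)
  moreover have "Off \<inter> (\<lambda>u. (u,u)) ` S = {}" by (auto simp: Off_def)
  moreover have "finite Off"
  proof -
    have "Off \<subseteq> S \<times> S" by (auto simp: Off_def)
    thus ?thesis using assms finite_subset by blast
  qed
  moreover have "card ((\<lambda>u. (u,u)) ` S) = card S" by (simp add: card_image inj_on_def)
  ultimately have "card S * card S = card Off + card S" using assms
    by (metis card_Un_disjoint card_cartesian_product finite_imageI)
  hence "card Off = card S * card S - card S" by simp
  also have "\<dots> = card S * (card S - 1)" by (simp add: diff_mult_distrib2)
  finally show ?thesis by (simp add: Off_def)
qed

lemma OC_bound: assumes xV: "x \<in> V"
  shows "(\<Sum>c\<in>V-{x}. d c * (d c - 1)) \<le> 2 * card (Mc x) + 2 * card (ABe x) + 2 * card (Cov x) + card (Bs x) * card (Bs x)"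
proof -
  define OC where "OC = Sigma (V - {x}) (\<lambda>c. {(u,w). u \<in> N c \<and> w \<in> N c \<and> u \<noteq> w})"
  have finOC: "finite OC" unfolding OC_def using finV fin_N
    by (intro finite_SigmaI) (auto intro: finite_subset[of _ "N _ \<times> N _"])
  have "card OC = (\<Sum>c\<in>V-{x}. d c * (d c - 1))"
    unfolding OC_def using finV fin_N
    by (subst card_SigmaI) (auto intro: finite_subset[of _ "N _ \<times> N _"] simp: offdiag_card)
  moreover have "inj_on snd OC"
  proof (rule inj_onI)
    fix p q assume "p \<in> OC" "q \<in> OC" "snd p = snd q"
    then obtain c c' u w where "p = (c,(u,w))" "q = (c',(u,w))" "adj c u" "adj c w" "adj c' u" "adj c' w" "u \<noteq> w"
      by (auto simp: OC_def N_def)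
    moreover then have "c = c'" using F1[of u c w c'] sym by blast
    ultimately show "p = q" by simp
  qed
  define MA where "MA = fst ` Mc x"
  define BA where "BA = snd ` ABe x"
  define R where "R = ({x} \<times> MA) \<union> (MA \<times> {x}) \<union> ({x} \<times> BA) \<union> (BA \<times> {x}) \<union> Cov x \<union> prod.swap ` Cov x \<union> (Bs x \<times> Bs x)"
  have "snd ` OC \<subseteq> R"
  proof
    fix r assume "r \<in> snd ` OC"
    then obtain p where p: "p \<in> OC" "r = snd p" by auto
    obtain c u w where pc: "p = (c,(u,w))" by (cases p) auto
    have r: "r = (u,w)" and c: "c \<in> V" "c \<noteq> x" and cu: "adj c u" and cw: "adj c w" and uw: "u \<noteq> w"
      using p pc by (auto simp: OC_def N_def)
    have uV: "u \<in> V" and wV: "w \<in> V" using cu cw adjV by auto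
    have part: "\<And>z. z \<in> V \<Longrightarrow> z = x \<or> z \<in> N x \<or> z \<in> Bs x" by (auto simp: Bs_def)
    show "r \<in> R"
    proof (cases "u = x")
      case True
      then have cN: "c \<in> N x" using cu sym by (auto simp: N_def)
      have "w \<in> N x \<or> w \<in> Bs x" using part[OF wV] uw True by auto
      thus ?thesis
      proof
        assume "w \<in> N x"
        then have "(w,c) \<in> Mc x" using cN cw sym by (auto simp: Mc_def N_def)
        then have "w \<in> MA" unfolding MA_def by force
        thus ?thesis using r True by (auto simp: R_def)
      next
        assume "w \<in> Bs x"
        then have "(c,w) \<in> ABe x" using cN cw by (auto simp: ABe_def)
        then have "w \<in> BA" unfolding BA_def by force
        thus ?thesis using r True by (auto simp: R_def)
      qed
    next
      case ux: False
      then have "u \<in> N x \<or> u \<in> Bs x" using part[OF uV] by auto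
      thus ?thesis
      proof
        assume uN: "u \<in> N x"
        show ?thesis
        proof (cases "w = x")
          case True
          then have cN: "c \<in> N x" using cw sym by (auto simp: N_def)
          then have "(u,c) \<in> Mc x" using uN cu sym by (auto simp: Mc_def N_def)
          then have "u \<in> MA" unfolding MA_def by force
          thus ?thesis using r True by (auto simp: R_def)
        next
          case False
          then have "w \<in> N x \<or> w \<in> Bs x" using part[OF wV] by auto
          thus ?thesis
          proof
            assume "w \<in> N x"
            then have "c = x" using F1[of u c w x] uN cu cw sym uw by (auto simp: N_def)
            thus ?thesis using c by simp
          next
            assume "w \<in> Bs x"
            then have "(u,w) \<in> Cov x" using uN cu cw sym by (auto simp: Cov_def)
            thus ?thesis using r by (auto simp: R_def)
          qed
        qed
      next
        assume uB: "u \<in> Bs x"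
        show ?thesis
        proof (cases "w = x")
          case True
          then have cN: "c \<in> N x" using cw sym by (auto simp: N_def)
          then have "(c,u) \<in> ABe x" using uB cu by (auto simp: ABe_def)
          then have "u \<in> BA" unfolding BA_def by force
          thus ?thesis using r True by (auto simp: R_def)
        next
          case False
          then have "w \<in> N x \<or> w \<in> Bs x" using part[OF wV] by auto
          thus ?thesis
          proof
            assume "w \<in> N x"
            then have "(w,u) \<in> Cov x" using uB cu cw sym by (auto simp: Cov_def)
            moreover have "(u,w) = prod.swap (w,u)" by simp
            ultimately show ?thesis using r unfolding R_def by blast
          next
            assume "w \<in> Bs x"
            thus ?thesis using r uB by (auto simp: R_def)
          qed
        qed
      qed
    qed
  qed
  have cMA: "card MA \<le> card (Mc x)" unfolding MA_def by (rule card_image_le[OF fin_Mc])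
  have cBA: "card BA \<le> card (ABe x)" unfolding BA_def by (rule card_image_le[OF fin_ABe])
  have fMA: "finite MA" unfolding MA_def using fin_Mc by simp
  have fBA: "finite BA" unfolding BA_def using fin_ABe by simp
  have "card R \<le> card MA + card MA + card BA + card BA + card (Cov x) + card (Cov x) + card (Bs x) * card (Bs x)"
  proof -
    have "card R \<le> card ({x} \<times> MA) + card (MA \<times> {x}) + card ({x} \<times> BA) + card (BA \<times> {x}) + card (Cov x) + card (prod.swap ` Cov x) + card (Bs x \<times> Bs x)"
      unfolding R_def by (rule order_trans[OF card_Un_le] add_mono card_Un_le order_refl)+
    moreover have "card (prod.swap ` Cov x) \<le> card (Cov x)" by (rule card_image_le[OF fin_Cov])
    ultimately show ?thesis by (simp add: card_cartesian_product)
  qed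
  moreover have "finite R" unfolding R_def using fMA fBA fin_Cov fin_Bs by auto
  ultimately have "card (snd ` OC) \<le> card MA + card MA + card BA + card BA + card (Cov x) + card (Cov x) + card (Bs x) * card (Bs x)"
    using \<open>snd ` OC \<subseteq> R\<close> by (meson card_mono le_trans)
  moreover have "card (snd ` OC) = card OC" using \<open>inj_on snd OC\<close> by (simp add: card_image)
  ultimately show ?thesis using \<open>card OC = _\<close> cMA cBA by linarith
qed

lemma ones_bound: assumes xV: "x \<in> V"
  shows "card {c \<in> V-{x}. d c = 1} \<le> d x - card (Mc x) + card (Bs x)"
proof -
  define MA where "MA = fst ` Mc x"
  have cMA: "card MA = card (Mc x)" unfolding MA_def using inj_fst_Mc by (simp add: card_image)
  have MAs: "MA \<subseteq> N x" unfolding MA_def by (auto simp: Mc_def N_def)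
  have "{c \<in> V-{x}. d c = 1} \<subseteq> (N x - MA) \<union> Bs x"
  proof
    fix c assume c: "c \<in> {c \<in> V-{x}. d c = 1}"
    show "c \<in> (N x - MA) \<union> Bs x"
    proof (rule ccontr)
      assume "c \<notin> (N x - MA) \<union> Bs x"
      then have "c \<in> MA" using c by (auto simp: Bs_def)
      then obtain b where "(c,b) \<in> Mc x" unfolding MA_def by force
      then have "{x,b} \<subseteq> N c" "x \<noteq> b" using sym irr by (auto simp: Mc_def N_def)
      then have "card {x,b} \<le> d c" using fin_N card_mono by blast
      thus False using c \<open>x \<noteq> b\<close> by simp
    qed
  qed
  then have "card {c \<in> V-{x}. d c = 1} \<le> card ((N x - MA) \<union> Bs x)"
    using fin_N fin_Bs by (intro card_mono) auto
  also have "\<dots> \<le> card (N x - MA) + card (Bs x)" by (rule card_Un_le)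
  also have "card (N x - MA) = d x - card MA" using MAs fin_N by (simp add: card_Diff_subset finite_subset)
  finally show ?thesis using cMA by simp
qed

lemma main_bound: assumes cV: "card V = n" and n50: "n \<ge> 50"
  shows "card Q2 \<le> 2 * ((n - 1) div 2) * (n - 3)"
proof -
  have "V \<noteq> {}" using cV n50 by auto
  then have "Max (d ` V) \<in> d ` V" using finV by simp
  then obtain x where xV: "x \<in> V" and xM: "d x = Max (d ` V)" by auto
  have xmax: "d c \<le> d x" if "c \<in> V" for c using xM that finV by simp
  have n2: "2 * ((n - 1) div 2) \<ge> n - 2" by linarith
  show ?thesis
  proof (cases "d x \<le> 7")
    case True
    have "card Q2 \<le> (\<Sum>c\<in>V. 35)" unfolding card_Q2
    proof (rule sum_mono)
      fix c assume "c \<in> V"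
      then have dc: "d c \<le> 7" using xmax True by (meson le_trans)
      have "card (Q2c c) \<le> d c * (d c - 2)" using card_Q2c card_Mc by (simp add: mult_le_mono1)
      also have "\<dots> \<le> 7 * (7 - 2)" using dc by (intro mult_mono) auto
      finally show "card (Q2c c) \<le> 35" by simp
    qed
    also have "\<dots> = 35 * n" using cV by simp
    also have "\<dots> \<le> 48 * (n - 3)" using n50 by simp
    also have "\<dots> \<le> 2 * ((n - 1) div 2) * (n - 3)" using n2 n50 by (intro mult_right_mono) auto
    finally show ?thesis .
  next
    case False
    obtain L where L: "card (Mc x) = 2 * L" using m_even by blast
    have h1: "card Q2 = card (Mc x) * (d x - 2) + (\<Sum>c\<in>V-{x}. card (Q2c c))"
      unfolding card_Q2 using finV xV by (simp add: sum.remove card_Q2c)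
    have h2: "(\<Sum>c\<in>V-{x}. card (Q2c c)) + (\<Sum>c\<in>V-{x}. d c) \<le> (\<Sum>c\<in>V-{x}. d c * (d c - 1)) + card {c \<in> V-{x}. d c = 1}"
    proof -
      have "(\<Sum>c\<in>V-{x}. card (Q2c c)) + (\<Sum>c\<in>V-{x}. d c) = (\<Sum>c\<in>V-{x}. card (Q2c c) + d c)"
        by (simp add: sum.distrib)
      also have "\<dots> \<le> (\<Sum>c\<in>V-{x}. d c * (d c - 1) + (if d c = 1 then 1 else 0))"
        by (rule sum_mono) (rule per_vertex)
      also have "\<dots> = (\<Sum>c\<in>V-{x}. d c * (d c - 1)) + card {c \<in> V-{x}. d c = 1}"
        using finV by (simp add: sum.distrib sum.If_cases Int_def)
      finally show ?thesis .
    qed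
    have D8: "8 \<le> d x" using False by simp
    show ?thesis
      by (rule arith_final[OF h1 h2 SD_bound[OF xV] OC_bound[OF xV] ones_bound[OF xV] cov_ab cov_Dk al_k b2_k card_Mc L partition[OF xV, unfolded cV] D8])
  qed
qed

lemma card_Q2_Qlt: "card Q2 = 2 * card {(a,b,c,e). adj a b \<and> adj b c \<and> adj a c \<and> adj c e \<and> e \<noteq> a \<and> e \<noteq> b \<and> a < b}"
proof -
  define L where "L = {(a,b,c,e). adj a b \<and> adj b c \<and> adj a c \<and> adj c e \<and> e \<noteq> a \<and> e \<noteq> b \<and> a < b}"
  define sw where "sw = (\<lambda>(a::nat,b::nat,c::nat,e::nat). (b,a,c,e))"
  have "Q2 = L \<union> sw ` L"
  proof
    show "Q2 \<subseteq> L \<union> sw ` L"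
    proof
      fix p assume p: "p \<in> Q2"
      obtain a b c e where ab: "p = (a,b,c,e)" by (cases p) auto
      have "a \<noteq> b" using p ab irr by (auto simp: Q2_def)
      show "p \<in> L \<union> sw ` L"
      proof (cases "a < b")
        case True thus ?thesis using p ab by (auto simp: L_def Q2_def)
      next
        case False
        then have "(b,a,c,e) \<in> L" using p ab sym \<open>a \<noteq> b\<close> by (auto simp: L_def Q2_def)
        moreover have "p = sw (b,a,c,e)" using ab by (simp add: sw_def)
        ultimately show ?thesis by blast
      qed
    qed
    show "L \<union> sw ` L \<subseteq> Q2" using sym by (auto simp: L_def Q2_def sw_def)
  qed
  moreover have "L \<inter> sw ` L = {}" by (auto simp: L_def sw_def)
  moreover have "finite Q2"
  proof -
    have "Q2 = (\<lambda>(c,(a,b,e)). (a,b,c,e)) ` (Sigma V Q2c)"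
      using adjV sym by (auto simp: Q2_def Q2c_def image_iff)
    thus ?thesis using finV fin_Q2c by simp
  qed
  moreover have "inj_on sw L" by (auto simp: inj_on_def sw_def)
  ultimately have "card Q2 = card L + card (sw ` L)"
    by (metis card_Un_disjoint finite_Un)
  moreover have "card (sw ` L) = card L" using \<open>inj_on sw L\<close> by (simp add: card_image)
  ultimately show ?thesis by (simp add: L_def)
qed
end

lemma phi_inj:
  fixes a b c e a' b' c' e' :: nat
  assumes d: "distinct [a,b,c,e]" "distinct [a',b',c',e']" and lt: "a < b" "a' < b'"
   and E: "{{a,b},{b,c},{a,c},{c,e}} = ({{a',b'},{b',c'},{a',c'},{c',e'}} :: nat set set)"
  shows "a = a' \<and> b = b' \<and> c = c' \<and> e = e'"
proof -
  have m1: "{c,e} \<in> {{a',b'},{b',c'},{a',c'},{c',e'}}" unfolding E[symmetric] by (rule insertI2, rule insertI2, rule insertI2, rule insertI1)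
  have m4: "{a',b'} \<in> {{a,b},{b,c},{a,c},{c,e}}" unfolding E by (rule insertI1)
  have m5: "{a,c} \<in> {{a',b'},{b',c'},{a',c'},{c',e'}}" unfolding E[symmetric] by (rule insertI2, rule insertI2, rule insertI1)
  have m6: "{b,c} \<in> {{a',b'},{b',c'},{a',c'},{c',e'}}" unfolding E[symmetric] by (rule insertI2, rule insertI1)
  have cc: "c = c'"
  proof (rule ccontr)
    assume nc: "c \<noteq> c'"
    show False using m1 m5 m6 d nc by (auto simp: doubleton_eq_iff)
  qed
  have ee: "e = e'"
  proof (rule ccontr)
    assume ne: "e \<noteq> e'"
    have "e = a' \<or> e = b'" using m1 cc ne d by (auto simp: doubleton_eq_iff)
    moreover have "{a',b'} = {a,b}" using m4 cc d by (auto simp: doubleton_eq_iff)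
    ultimately show False using d by (auto simp: doubleton_eq_iff)
  qed
  have "{a',b'} = {a,b}" using m4 cc d by (auto simp: doubleton_eq_iff)
  then show ?thesis using cc ee lt by (auto simp: doubleton_eq_iff)
qed

definition gadj :: "nat graph \<Rightarrow> nat \<Rightarrow> nat \<Rightarrow> bool" where "gadj G u v \<longleftrightarrow> {u,v} \<in> snd G"

definition Qlt :: "(nat \<Rightarrow> nat \<Rightarrow> bool) \<Rightarrow> (nat \<times> nat \<times> nat \<times> nat) set" where
  "Qlt adj = {(a,b,c,e). adj a b \<and> adj b c \<and> adj a c \<and> adj c e \<and> e \<noteq> a \<and> e \<noteq> b \<and> a < b}"

definition phi :: "nat \<times> nat \<times> nat \<times> nat \<Rightarrow> nat graph" where
  "phi = (\<lambda>(a,b,c,e). ({a,b,c,e}, {{a,b},{b,c},{a,c},{c,e}}))"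

lemma fin_subgraphs: assumes "simple_graph G" shows "finite (subgraphs G)"
proof -
  have fV: "finite (fst G)" using assms by (simp add: simple_graph_def)
  have "snd G \<subseteq> Pow (fst G)" using assms by (fastforce simp: simple_graph_def)
  then have fE: "finite (snd G)" using fV finite_subset by blast
  have "subgraphs G \<subseteq> Pow (fst G) \<times> Pow (snd G)" by (auto simp: subgraphs_def)
  moreover have "finite (Pow (fst G) \<times> Pow (snd G))" using fV fE by simp
  ultimately show ?thesis using finite_subset by blast
qed

lemma iso4_D:
  assumes "graph_iso (({0,1,2,3}, E) :: nat graph) (S :: nat graph)"
  obtains f where "inj_on f {0,1,2,3}" "fst S = {f 0, f 1, f 2, f 3}" "snd S = (\<lambda>e. f ` e) ` E"
proof -
  obtain f where f: "bij_betw f {0,1,2,3} (fst S)" "(\<lambda>e. f ` e) ` E = snd S"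
    using assms unfolding graph_iso_def by (metis fst_conv snd_conv)
  then have 1: "inj_on f {0,1,2,3}" and 2: "f ` {0,1,2,3} = fst S" unfolding bij_betw_def by blast+
  from 2 have 3: "fst S = {f 0, f 1, f 2, f 3}" by simp
  show ?thesis by (rule that[OF 1 3 f(2)[symmetric]])
qed

lemma inj4: "inj_on (f::nat \<Rightarrow> nat) {0,1,2,3} \<Longrightarrow> distinct [f 0, f 1, f 2, f 3]"
  by (simp add: inj_on_def)

lemma paw_D:
  assumes "graph_iso paw (S :: nat graph)"
  shows "\<exists>a b c e. distinct [a,b,c,e] \<and> S = ({a,b,c,e}, {{a,b},{b,c},{a,c},{c,e}})"
proof -
  obtain f :: "nat \<Rightarrow> nat" where f: "inj_on f {0,1,2,3}" "fst S = {f 0, f 1, f 2, f 3}"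
    "snd S = (\<lambda>e. f ` e) ` {{0,1},{1,2},{0,2},{2,3}}"
    by (rule iso4_D[OF assms[unfolded paw_def]])
  have X: "snd S = {{f 0, f 1},{f 1, f 2},{f 0, f 2},{f 2, f 3}}" using f(3) by simp
  have "S = (fst S, snd S)" by simp
  also have "\<dots> = ({f 0, f 1, f 2, f 3}, {{f 0, f 1},{f 1, f 2},{f 0, f 2},{f 2, f 3}})" by (simp only: f(2) X)
  finally have "S = ({f 0, f 1, f 2, f 3}, {{f 0, f 1},{f 1, f 2},{f 0, f 2},{f 2, f 3}})" .
  with inj4[OF f(1)] show ?thesis by (intro exI[of _ "f 0"] exI[of _ "f 1"] exI[of _ "f 2"] exI[of _ "f 3"] conjI)
qed

lemma C4_D:
  assumes "graph_iso C4 (S :: nat graph)"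
  shows "\<exists>a b c e. distinct [a,b,c,e] \<and> S = ({a,b,c,e}, {{a,b},{b,c},{c,e},{e,a}})"
proof -
  obtain f :: "nat \<Rightarrow> nat" where f: "inj_on f {0,1,2,3}" "fst S = {f 0, f 1, f 2, f 3}"
    "snd S = (\<lambda>e. f ` e) ` {{0,1},{1,2},{2,3},{3,0}}"
    by (rule iso4_D[OF assms[unfolded C4_def]])
  have X: "snd S = {{f 0, f 1},{f 1, f 2},{f 2, f 3},{f 3, f 0}}" using f(3) by simp
  have "S = (fst S, snd S)" by simp
  also have "\<dots> = ({f 0, f 1, f 2, f 3}, {{f 0, f 1},{f 1, f 2},{f 2, f 3},{f 3, f 0}})" by (simp only: f(2) X)
  finally have "S = ({f 0, f 1, f 2, f 3}, {{f 0, f 1},{f 1, f 2},{f 2, f 3},{f 3, f 0}})" .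
  with inj4[OF f(1)] show ?thesis by (intro exI[of _ "f 0"] exI[of _ "f 1"] exI[of _ "f 2"] exI[of _ "f 3"] conjI)
qed

definition f4 :: "nat \<Rightarrow> nat \<Rightarrow> nat \<Rightarrow> nat \<Rightarrow> nat \<Rightarrow> nat" where
  "f4 a b c e i = (if i = 0 then a else if i = 1 then b else if i = 2 then c else e)"

lemma f4_simps: "f4 a b c e 0 = a" "f4 a b c e 1 = b" "f4 a b c e (Suc 0) = b" "f4 a b c e 2 = c" "f4 a b c e 3 = e"
  by (simp_all add: f4_def)

lemma f4_bij: assumes "distinct [a::nat,b,c,e]" shows "bij_betw (f4 a b c e) {0,1,2,3} {a,b,c,e}"
proof -
  have "inj_on (f4 a b c e) {0,1,2,3}"
    unfolding inj_on_def using assms by (simp add: f4_simps)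
  moreover have "f4 a b c e ` {0,1,2,3} = {a,b,c,e}" by (simp add: f4_simps)
  ultimately show ?thesis by (simp add: bij_betw_def)
qed

lemma paw_I: assumes "distinct [a::nat,b,c,e]" shows "graph_iso paw ({a,b,c,e}, {{a,b},{b,c},{a,c},{c,e}})"
proof -
  have "(\<lambda>E. f4 a b c e ` E) ` {{0,1},{1,2},{0,2},{2,3}} = {{a,b},{b,c},{a,c},{c,e}}"
    by (simp add: f4_simps)
  thus ?thesis unfolding graph_iso_def paw_def using f4_bij[OF assms] by auto
qed

lemma C4_I: assumes "distinct [a::nat,b,c,e]" shows "graph_iso C4 ({a,b,c,e}, {{a,b},{b,c},{c,e},{e,a}})"
proof -
  have "(\<lambda>E. f4 a b c e ` E) ` {{0,1},{1,2},{2,3},{3,0}} = {{a,b},{b,c},{c,e},{e,a}}"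
    by (simp add: f4_simps)
  thus ?thesis unfolding graph_iso_def C4_def using f4_bij[OF assms] by auto
qed


lemma gadj_props: assumes "simple_graph G" "gadj G u v" shows "u \<in> fst G" "v \<in> fst G" "u \<noteq> v"
proof -
  from assms obtain x y where "{u,v} = {x,y}" "x \<noteq> y" "x \<in> fst G" "y \<in> fst G"
    unfolding simple_graph_def gadj_def by blast
  thus "u \<in> fst G" "v \<in> fst G" "u \<noteq> v" by (auto simp: doubleton_eq_iff)
qed

lemma gadj_sym: "gadj G u v \<Longrightarrow> gadj G v u" by (simp add: gadj_def insert_commute)

lemma free_C4_D: assumes sg: "simple_graph G" and fr: "free C4 G"
  and h: "gadj G a b" "gadj G b c" "gadj G c d" "gadj G d a" "a \<noteq> c" "b \<noteq> d"
  shows False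
proof -
  have "a \<noteq> b" "b \<noteq> c" "c \<noteq> d" "d \<noteq> a" using gadj_props(3)[OF sg] h(1-4) by blast+
  then have dist: "distinct [a,b,c,d]" using h(5,6) by auto
  define S where "S = ({a,b,c,d}, {{a,b},{b,c},{c,d},{d,a}})"
  have "S \<in> subgraphs G"
  proof -
    have V: "{a,b,c,d} \<subseteq> fst G" using gadj_props(1,2)[OF sg] h(1-4) by simp
    have E: "{{a,b},{b,c},{c,d},{d,a}} \<subseteq> snd G" using h(1-4) by (simp add: gadj_def)
    have "\<forall>x\<in>{{a,b},{b,c},{c,d},{d,a}}. x \<subseteq> {a,b,c,d}" by simp
    thus ?thesis using V E by (simp add: subgraphs_def S_def)
  qed
  moreover have "graph_iso C4 S" unfolding S_def by (rule C4_I[OF dist])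
  ultimately have "S \<in> {S \<in> subgraphs G. graph_iso C4 S}" by simp
  moreover have "finite {S \<in> subgraphs G. graph_iso C4 S}" using fin_subgraphs[OF sg] by simp
  ultimately have "count_sub C4 G \<noteq> 0" unfolding count_sub_def by (metis card_0_eq empty_iff)
  thus False using fr by (simp add: free_def)
qed

lemma interp: assumes sg: "simple_graph G"
  and c4: "\<And>a b c d. gadj G a b \<Longrightarrow> gadj G b c \<Longrightarrow> gadj G c d \<Longrightarrow> gadj G d a \<Longrightarrow> a \<noteq> c \<Longrightarrow> b \<noteq> d \<Longrightarrow> False"
  shows "c4free (fst G) (gadj G)"
proof
  show "finite (fst G)" using sg by (simp add: simple_graph_def)
  show "\<And>u v. gadj G u v \<Longrightarrow> u \<in> fst G \<and> v \<in> fst G" using gadj_props[OF sg] by blast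
  show "\<And>u v. gadj G u v \<Longrightarrow> gadj G v u" by (rule gadj_sym)
  show "\<And>u. \<not> gadj G u u" using gadj_props[OF sg] by blast
  show "\<And>a b c d. gadj G a b \<Longrightarrow> gadj G b c \<Longrightarrow> gadj G c d \<Longrightarrow> gadj G d a \<Longrightarrow> a \<noteq> c \<Longrightarrow> b \<noteq> d \<Longrightarrow> False"
    by (rule c4)
qed

lemma sub_I: assumes sg: "simple_graph G" and "gadj G a b" "gadj G b c" "gadj G a c" "gadj G c e"
  shows "({a,b,c,e}, {{a,b},{b,c},{a,c},{c,e}}) \<in> subgraphs G"
proof -
  have V: "{a,b,c,e} \<subseteq> fst G" using gadj_props(1,2)[OF sg] assms(2-5) by simp
  have E: "{{a,b},{b,c},{a,c},{c,e}} \<subseteq> snd G" using assms(2-5) by (simp add: gadj_def)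
  have "\<forall>x\<in>{{a,b},{b,c},{a,c},{c,e}}. x \<subseteq> {a,b,c,e}" by simp
  thus ?thesis using V E by (simp add: subgraphs_def)
qed

lemma sub_D: assumes "(V', E') \<in> subgraphs G" "{u,v} \<in> E'" shows "gadj G u v"
  using assms by (auto simp: subgraphs_def gadj_def)

lemma paws_eq: assumes sg: "simple_graph G"
  shows "{S \<in> subgraphs G. graph_iso paw S} = phi ` Qlt (gadj G)"
proof
  show "{S \<in> subgraphs G. graph_iso paw S} \<subseteq> phi ` Qlt (gadj G)"
  proof
    fix S assume S: "S \<in> {S \<in> subgraphs G. graph_iso paw S}"
    then obtain a b c e where d: "distinct [a,b,c,e]" and Se: "S = ({a,b,c,e}, {{a,b},{b,c},{a,c},{c,e}})"
      using paw_D by (metis (no_types, lifting) mem_Collect_eq)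
    have Ssub: "({a,b,c,e}, {{a,b},{b,c},{a,c},{c,e}}) \<in> subgraphs G" using S Se by simp
    have E: "gadj G a b" "gadj G b c" "gadj G a c" "gadj G c e"
      by (rule sub_D[OF Ssub]; simp)+
    show "S \<in> phi ` Qlt (gadj G)"
    proof (cases "a < b")
      case True
      then have "(a,b,c,e) \<in> Qlt (gadj G)" using E d by (simp add: Qlt_def)
      moreover have "phi (a,b,c,e) = S" using Se by (simp add: phi_def)
      ultimately show ?thesis by (metis image_eqI)
    next
      case False
      then have "b < a" using d by simp
      then have "(b,a,c,e) \<in> Qlt (gadj G)" using E d gadj_sym[OF E(1)] by (simp add: Qlt_def)
      moreover have "phi (b,a,c,e) = S"
      proof -
        have 1: "{b,a,c,e} = {a,b,c,e}" by (simp only: insert_commute)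
        have 2: "{{b,a},{a,c},{b,c},{c,e}} = {{a,b},{b,c},{a,c},{c,e}}" by (simp only: insert_commute)
        show ?thesis using Se 1 2 by (simp add: phi_def)
      qed
      ultimately show ?thesis by (metis image_eqI)
    qed
  qed
  show "phi ` Qlt (gadj G) \<subseteq> {S \<in> subgraphs G. graph_iso paw S}"
  proof
    fix S assume "S \<in> phi ` Qlt (gadj G)"
    then obtain a b c e where t: "(a,b,c,e) \<in> Qlt (gadj G)" and Se: "S = phi (a,b,c,e)" by auto
    have E: "gadj G a b" "gadj G b c" "gadj G a c" "gadj G c e" "e \<noteq> a" "e \<noteq> b" "a < b"
      using t by (simp_all add: Qlt_def)
    have "b \<noteq> c" "a \<noteq> c" "c \<noteq> e" using gadj_props(3)[OF sg] E(2,3,4) by blast+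
    then have d: "distinct [a,b,c,e]" using E(5-7) by auto
    have "S \<in> subgraphs G" unfolding Se phi_def using sub_I[OF sg E(1-4)] by simp
    moreover have "graph_iso paw S" unfolding Se phi_def using paw_I[OF d] by simp
    ultimately show "S \<in> {S \<in> subgraphs G. graph_iso paw S}" by simp
  qed
qed

lemma phi_inj_on: assumes sg: "simple_graph G" shows "inj_on phi (Qlt (gadj G))"
proof (rule inj_onI)
  fix p q assume p: "p \<in> Qlt (gadj G)" and q: "q \<in> Qlt (gadj G)" and e: "phi p = phi q"
  obtain a b c d where pp: "p = (a,b,c,d)" by (cases p) auto
  obtain a' b' c' d' where qq: "q = (a',b',c',d')" by (cases q) auto
  have E1: "gadj G a b" "gadj G b c" "gadj G a c" "gadj G c d" "d \<noteq> a" "d \<noteq> b" "a < b"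
    using p pp by (simp_all add: Qlt_def)
  have "b \<noteq> c" "a \<noteq> c" "c \<noteq> d" using gadj_props(3)[OF sg] E1(2,3,4) by blast+
  then have d1: "distinct [a,b,c,d]" "a < b" using E1(5-7) by auto
  have E2: "gadj G a' b'" "gadj G b' c'" "gadj G a' c'" "gadj G c' d'" "d' \<noteq> a'" "d' \<noteq> b'" "a' < b'"
    using q qq by (simp_all add: Qlt_def)
  have "b' \<noteq> c'" "a' \<noteq> c'" "c' \<noteq> d'" using gadj_props(3)[OF sg] E2(2,3,4) by blast+
  then have d2: "distinct [a',b',c',d']" "a' < b'" using E2(5-7) by auto
  have X1: "snd (phi (a,b,c,d)) = {{a,b},{b,c},{a,c},{c,d}}" by (simp add: phi_def)
  have X2: "snd (phi (a',b',c',d')) = {{a',b'},{b',c'},{a',c'},{c',d'}}" by (simp add: phi_def)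
  have "snd (phi (a,b,c,d)) = snd (phi (a',b',c',d'))" using e pp qq by metis
  then have "{{a,b},{b,c},{a,c},{c,d}} = {{a',b'},{b',c'},{a',c'},{c',d'}}" unfolding X1 X2 .
  then have "a = a' \<and> b = b' \<and> c = c' \<and> d = d'" by (rule phi_inj[OF d1(1) d2(1) d1(2) d2(2)])
  then show "p = q" using pp qq by simp
qed

lemma count_paw: assumes sg: "simple_graph G" shows "count_sub paw G = card (Qlt (gadj G))"
  unfolding count_sub_def paws_eq[OF sg] using phi_inj_on[OF sg] by (simp add: card_image)

definition fP :: "nat \<Rightarrow> nat \<Rightarrow> nat \<Rightarrow> bool" where
  "fP n u v \<longleftrightarrow> 1 \<le> u \<and> 1 \<le> v \<and> u \<noteq> v \<and> (u+1) div 2 = (v+1) div 2 \<and> (u+1) div 2 \<le> (n-1) div 2"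

definition fadj :: "nat \<Rightarrow> nat \<Rightarrow> nat \<Rightarrow> bool" where
  "fadj n u v \<longleftrightarrow> (u = 0 \<and> 1 \<le> v \<and> v < n) \<or> (v = 0 \<and> 1 \<le> u \<and> u < n) \<or> fP n u v"

lemma cls: "(x::nat) + 1 = 2 * ((x+1) div 2) \<or> x + 1 = 2 * ((x+1) div 2) + 1"
proof -
  have "x + 1 = 2 * ((x+1) div 2) + (x+1) mod 2" by simp
  moreover have "(x+1) mod 2 = 0 \<or> (x+1) mod 2 = 1" by auto
  ultimately show ?thesis by auto
qed
lemma fP_pair: "fP n u v \<longleftrightarrow> (\<exists>i. 1 \<le> i \<and> i \<le> (n-1) div 2 \<and> ((u = 2*i-1 \<and> v = 2*i) \<or> (u = 2*i \<and> v = 2*i-1)))"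
proof
  assume h: "fP n u v"
  define i where "i = (u+1) div 2"
  have "(v+1) div 2 = i" "u \<noteq> v" "1 \<le> u" "1 \<le> v" "i \<le> (n-1) div 2" using h unfolding fP_def i_def by auto
  then have "1 \<le> i" "(u = 2*i-1 \<and> v = 2*i) \<or> (u = 2*i \<and> v = 2*i-1)"
    using cls[of u] cls[of v] unfolding i_def by linarith+
  thus "\<exists>i. 1 \<le> i \<and> i \<le> (n-1) div 2 \<and> ((u = 2*i-1 \<and> v = 2*i) \<or> (u = 2*i \<and> v = 2*i-1))"
    using \<open>i \<le> (n-1) div 2\<close> by blast
next
  assume "\<exists>i. 1 \<le> i \<and> i \<le> (n-1) div 2 \<and> ((u = 2*i-1 \<and> v = 2*i) \<or> (u = 2*i \<and> v = 2*i-1))"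
  then obtain i where i: "1 \<le> i" "i \<le> (n-1) div 2" "(u = 2*i-1 \<and> v = 2*i) \<or> (u = 2*i \<and> v = 2*i-1)" by blast
  have a: "(2*i-1+1) div 2 = i" using i(1) by simp
  have b: "(2*i+1) div 2 = i" by simp
  show "fP n u v" using i a b unfolding fP_def by auto
qed

lemma fr_adj: "gadj (friendship n) u v \<longleftrightarrow> fadj n u v"
proof
  assume "gadj (friendship n) u v"
  then have "{u,v} \<in> {{0, v} | v. 1 \<le> v \<and> v < n} \<or> {u,v} \<in> {{2*i - 1, 2*i} | i. 1 \<le> i \<and> i \<le> (n - 1) div 2}"
    by (simp add: gadj_def friendship_def)
  then show "fadj n u v"
  proof
    assume "{u,v} \<in> {{0, v} | v. 1 \<le> v \<and> v < n}"
    then obtain w where "{u,v} = {0,w}" "1 \<le> w" "w < n" by blast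
    then show ?thesis unfolding fadj_def by (auto simp: doubleton_eq_iff)
  next
    assume "{u,v} \<in> {{2*i - 1, 2*i} | i. 1 \<le> i \<and> i \<le> (n - 1) div 2}"
    then obtain i where "{u,v} = {2*i-1,2*i}" "1 \<le> i" "i \<le> (n-1) div 2" by blast
    then have "fP n u v" unfolding fP_pair by (auto simp: doubleton_eq_iff)
    then show ?thesis unfolding fadj_def by simp
  qed
next
  assume "fadj n u v"
  then consider "u = 0 \<and> 1 \<le> v \<and> v < n" | "v = 0 \<and> 1 \<le> u \<and> u < n" | "fP n u v"
    unfolding fadj_def by blast
  then show "gadj (friendship n) u v"
  proof cases
    case 1 then show ?thesis by (auto simp: gadj_def friendship_def)
  next
    case 2
    then have "{u,v} = {0,u}" by auto
    then show ?thesis using 2 by (auto simp: gadj_def friendship_def)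
  next
    case 3
    then obtain i where i: "1 \<le> i" "i \<le> (n-1) div 2" "(u = 2*i-1 \<and> v = 2*i) \<or> (u = 2*i \<and> v = 2*i-1)"
      unfolding fP_pair by blast
    then have "{u,v} = {2*i-1,2*i}" by auto
    then show ?thesis using i(1,2) unfolding gadj_def friendship_def by auto
  qed
qed

lemma fr_simple: "simple_graph (friendship n)"
  unfolding simple_graph_def
proof (intro conjI ballI)
  show "finite (fst (friendship n))" by (simp add: friendship_def)
  fix e assume "e \<in> snd (friendship n)"
  then have "e \<in> {{0, v} | v. 1 \<le> v \<and> v < n} \<or> e \<in> {{2*i - 1, 2*i} | i. 1 \<le> i \<and> i \<le> (n - 1) div 2}"
    by (simp add: friendship_def)
  then show "\<exists>u v. e = {u, v} \<and> u \<noteq> v \<and> u \<in> fst (friendship n) \<and> v \<in> fst (friendship n)"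
  proof
    assume "e \<in> {{0, v} | v. 1 \<le> v \<and> v < n}"
    then obtain w where "e = {0,w}" "1 \<le> w" "w < n" by blast
    then show ?thesis by (intro exI[of _ 0] exI[of _ w]) (auto simp: friendship_def)
  next
    assume "e \<in> {{2*i - 1, 2*i} | i. 1 \<le> i \<and> i \<le> (n - 1) div 2}"
    then obtain i where "e = {2*i-1,2*i}" "1 \<le> i" "i \<le> (n-1) div 2" by blast
    then show ?thesis by (intro exI[of _ "2*i-1"] exI[of _ "2*i"]) (auto simp: friendship_def)
  qed
qed

lemma fr_graphs_on: "friendship n \<in> graphs_on n"
  unfolding graphs_on_def using fr_simple by (simp add: friendship_def)

lemma fP_sym: "fP n u v \<Longrightarrow> fP n v u" unfolding fP_def by auto
lemma fP_uniq: assumes "fP n u v" "fP n u w" shows "v = w"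
proof -
  have "(u+1) div 2 = (v+1) div 2" "(u+1) div 2 = (w+1) div 2" "u \<noteq> v" "u \<noteq> w"
    using assms unfolding fP_def by auto
  thus ?thesis using cls[of u] cls[of v] cls[of w] by linarith
qed
lemma fadj_nz: "fadj n u v \<Longrightarrow> u \<noteq> 0 \<Longrightarrow> v \<noteq> 0 \<Longrightarrow> fP n u v" unfolding fadj_def by auto
lemma fadj_irr: "\<not> fadj n u u" unfolding fadj_def fP_def by auto

lemma fr_c4: assumes "fadj n a b" "fadj n b c" "fadj n c d" "fadj n d a" "a \<noteq> c" "b \<noteq> d"
  shows False
proof -
  have ab: "a \<noteq> b" "b \<noteq> c" "c \<noteq> d" "d \<noteq> a" using assms fadj_irr by metis+
  show False
  proof (cases "a = 0 \<or> c = 0")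
    case True
    then have "b \<noteq> 0" "d \<noteq> 0" using ab by auto
    moreover have "a \<noteq> 0 \<or> c \<noteq> 0" using assms(5) by auto
    ultimately show False
    proof (cases "a = 0")
      case True
      then have c0: "c \<noteq> 0" using assms(5) by auto
      have "fP n c b" using fadj_nz[OF assms(2)] c0 \<open>b \<noteq> 0\<close> fP_sym by blast
      moreover have "fP n c d" using fadj_nz[OF assms(3)] c0 \<open>d \<noteq> 0\<close> by blast
      ultimately show False using fP_uniq assms(6) by blast
    next
      case False
      then have c0: "c = 0" using \<open>a = 0 \<or> c = 0\<close> by auto
      have "fP n a b" using fadj_nz[OF assms(1)] False \<open>b \<noteq> 0\<close> by blast
      moreover have "fP n a d" using fadj_nz[OF assms(4)] False \<open>d \<noteq> 0\<close> fP_sym by blast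
      ultimately show False using fP_uniq assms(6) by blast
    qed
  next
    case False
    then have a0: "a \<noteq> 0" "c \<noteq> 0" by auto
    show False
    proof (cases "b = 0")
      case True
      then have d0: "d \<noteq> 0" using assms(6) by auto
      have "fP n d c" using fadj_nz[OF assms(3)] d0 a0 fP_sym by blast
      moreover have "fP n d a" using fadj_nz[OF assms(4)] d0 a0 by blast
      ultimately show False using fP_uniq assms(5) by blast
    next
      case False
      have "fP n b a" using fadj_nz[OF assms(1)] False a0 fP_sym by blast
      moreover have "fP n b c" using fadj_nz[OF assms(2)] False a0 by blast
      ultimately show False using fP_uniq assms(5) by blast
    qed
  qed
qed

lemma fr_free: "free C4 (friendship n)"
proof -
  have "{S \<in> subgraphs (friendship n). graph_iso C4 S} = {}"
  proof (rule ccontr)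
    assume "{S \<in> subgraphs (friendship n). graph_iso C4 S} \<noteq> {}"
    then obtain S where S: "S \<in> subgraphs (friendship n)" "graph_iso C4 S" by blast
    obtain a b c e where d: "distinct [a,b,c,e]" and Se: "S = ({a,b,c,e}, {{a,b},{b,c},{c,e},{e,a}})"
      using C4_D[OF S(2)] by blast
    have Ssub: "({a,b,c,e}, {{a,b},{b,c},{c,e},{e,a}}) \<in> subgraphs (friendship n)" using S(1) Se by simp
    have "gadj (friendship n) a b" "gadj (friendship n) b c" "gadj (friendship n) c e" "gadj (friendship n) e a"
      by (rule sub_D[OF Ssub]; simp)+
    then show False using fr_c4[of n a b c e] d unfolding fr_adj by auto
  qed
  thus ?thesis unfolding free_def count_sub_def by (simp only: card.empty)
qed

lemma formula: assumes "n \<ge> (3::nat)"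
  shows "int (((n-1) div 2) * (n-3)) = (if odd n then int (n choose 2) - 3 * (int n - 1) div 2
       else int (n choose 2) - 2 * int n + 3)"
proof (cases "odd n")
  case True
  then obtain m where m: "n = 2*m+1" using oddE by blast
  have m1: "m \<ge> 1" using assms m by simp
  have c: "n choose 2 = m * (2*m+1)"
  proof -
    have "n * (n - 1) = 2 * (m * (2*m+1))" using m by (simp add: algebra_simps)
    thus ?thesis by (simp add: choose_two)
  qed
  have h: "(n-1) div 2 = m" using m by simp
  have d: "3 * (int n - 1) div 2 = 3 * int m" using m by simp
  have "int (m * (n-3)) = int m * (2 * int m - 2)" using m m1 by (simp add: of_nat_diff)
  then show ?thesis using True c h d by (simp add: algebra_simps)
next
  case False
  then obtain m where m: "n = 2*m" using evenE by blast
  have m1: "m \<ge> 2" using assms m by simp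
  have c: "n choose 2 = m * (2*m-1)"
  proof -
    have "n * (n - 1) = 2 * (m * (2*m-1))" using m by (simp add: algebra_simps)
    thus ?thesis by (simp add: choose_two)
  qed
  have "n - 1 = 2*(m-1) + 1" using m m1 by simp
  then have h: "(n-1) div 2 = m - 1" by simp
  have "int ((m-1) * (n-3)) = (int m - 1) * (2 * int m - 3)" using m m1 by (simp add: of_nat_diff)
  moreover have "int (m * (2*m-1)) = int m * (2 * int m - 1)" using m1 by (simp add: of_nat_diff)
  ultimately show ?thesis using False c h m by (simp add: algebra_simps)
qed

lemma gadj_fr: "gadj (friendship n) = fadj n" by (intro ext) (simp add: fr_adj)

lemma fr_c4free: "c4free {0..<n} (fadj n)"
proof -
  have "c4free (fst (friendship n)) (gadj (friendship n))"
  proof (rule interp[OF fr_simple])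
    fix a b c d assume "gadj (friendship n) a b" "gadj (friendship n) b c" "gadj (friendship n) c d"
      "gadj (friendship n) d a" "a \<noteq> c" "b \<noteq> d"
    then show False using fr_c4 unfolding fr_adj by blast
  qed
  moreover have "fst (friendship n) = {0..<n}" by (simp add: friendship_def)
  ultimately show ?thesis by (simp only: gadj_fr)
qed

lemma fP_range: "fP n a b \<Longrightarrow> 1 \<le> a \<and> a \<le> 2 * ((n-1) div 2)"
  unfolding fP_pair by auto

lemma fP_card: "card {(a,b). fP n a b} = 2 * ((n-1) div 2)"
proof -
  define h where "h = (n-1) div 2"
  have inj: "inj_on fst {(a,b). fP n a b}"
    by (rule inj_onI) (auto dest: fP_uniq)
  have "fst ` {(a,b). fP n a b} = {1..2*h}"
  proof
    show "fst ` {(a,b). fP n a b} \<subseteq> {1..2*h}" using fP_range unfolding h_def by auto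
    show "{1..2*h} \<subseteq> fst ` {(a,b). fP n a b}"
    proof
      fix a assume a: "a \<in> {1..2*h}"
      define i where "i = (a+1) div 2"
      have i: "1 \<le> i" "i \<le> h" "a = 2*i-1 \<or> a = 2*i" using a cls[of a] unfolding i_def by auto
      have "\<exists>b. fP n a b"
      proof (cases "a = 2*i-1")
        case True then show ?thesis unfolding fP_pair using i h_def by blast
      next
        case False then have "a = 2*i" using i by simp
        then show ?thesis unfolding fP_pair using i h_def by blast
      qed
      then obtain b where "fP n a b" by blast
      then show "a \<in> fst ` {(a,b). fP n a b}" by force
    qed
  qed
  then have "card {(a,b). fP n a b} = card {1..2*h}" using inj card_image by metis
  thus ?thesis unfolding h_def by simp
qed

lemma fr_Q2: assumes "n \<ge> 3" shows "card (c4free.Q2 (fadj n)) = 2 * ((n-1) div 2) * (n - 3)"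
proof -
  interpret I: c4free "{0..<n}" "fadj n" by (rule fr_c4free)
  have z: "card (I.Q2c c) = 0" if "c \<in> {0..<n} - {0}" for c
  proof -
    have "I.Q2c c = {}"
    proof (rule ccontr)
      assume "I.Q2c c \<noteq> {}"
      then obtain a b e where t: "fadj n c a" "fadj n c b" "fadj n c e" "fadj n a b" "e \<noteq> a" "e \<noteq> b"
        unfolding I.Q2c_def by blast
      have c0: "c \<noteq> 0" using that by simp
      have "a \<noteq> b" using t(4) fadj_irr by metis
      show False
      proof (cases "a = 0")
        case True
        then have "b \<noteq> 0" "e \<noteq> 0" using \<open>a \<noteq> b\<close> t(5) by auto
        then have "fP n c b" "fP n c e" using fadj_nz t c0 by blast+
        then show False using fP_uniq t(6) by blast
      next
        case a0: False
        show False
        proof (cases "b = 0")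
          case True
          then have "e \<noteq> 0" using t(6) by auto
          then have "fP n c a" "fP n c e" using fadj_nz t c0 a0 by blast+
          then show False using fP_uniq t(5) by blast
        next
          case False
          then have "fP n c a" "fP n c b" using fadj_nz t c0 a0 by blast+
          then show False using fP_uniq \<open>a \<noteq> b\<close> by blast
        qed
      qed
    qed
    thus ?thesis by simp
  qed
  have N0: "I.N 0 = {1..<n}" unfolding I.N_def fadj_def fP_def by auto
  have M0: "I.Mc 0 = {(a,b). fP n a b}"
  proof -
    have r: "1 \<le> a \<and> 1 \<le> b \<and> a < n \<and> b < n" if "fP n a b" for a b
    proof -
      have "1 \<le> a \<and> a \<le> 2 * ((n-1) div 2)" "1 \<le> b \<and> b \<le> 2 * ((n-1) div 2)"
        using fP_range[OF that] fP_range[OF fP_sym[OF that]] by auto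
      thus ?thesis by linarith
    qed
    have nz: "\<not> fP n 0 b" for b unfolding fP_def by simp
    show ?thesis unfolding I.Mc_def fadj_def using r nz by auto
  qed
  have "card I.Q2 = (\<Sum>c\<in>{0..<n}. card (I.Q2c c))" by (rule I.card_Q2)
  also have "\<dots> = card (I.Q2c 0) + (\<Sum>c\<in>{0..<n} - {0}. card (I.Q2c c))"
    using assms by (subst sum.remove[of _ 0]) auto
  also have "(\<Sum>c\<in>{0..<n} - {0}. card (I.Q2c c)) = 0" using z by simp
  also have "card (I.Q2c 0) = card (I.Mc 0) * (I.d 0 - 2)" by (rule I.card_Q2c)
  also have "\<dots> = 2 * ((n-1) div 2) * (n - 3)" using N0 M0 fP_card by (simp add: numeral_3_eq_3)
  finally show ?thesis by simp
qed

lemma fr_count: assumes "n \<ge> 3" shows "count_sub paw (friendship n) = ((n-1) div 2) * (n - 3)"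
proof -
  interpret I: c4free "{0..<n}" "fadj n" by (rule fr_c4free)
  have "count_sub paw (friendship n) = card (Qlt (fadj n))"
    using count_paw[OF fr_simple] gadj_fr by simp
  moreover have "card I.Q2 = 2 * card (Qlt (fadj n))" unfolding Qlt_def by (rule I.card_Q2_Qlt)
  ultimately show ?thesis using fr_Q2[OF assms] by simp
qed

lemma gen_bound: assumes G: "G \<in> graphs_on n" and fr: "free C4 G" and n50: "n \<ge> 50"
  shows "count_sub paw G \<le> ((n-1) div 2) * (n - 3)"
proof -
  have sg: "simple_graph G" and V: "fst G = {0..<n}" using G by (auto simp: graphs_on_def)
  interpret J: c4free "fst G" "gadj G"
    by (rule interp[OF sg]) (rule free_C4_D[OF sg fr])
  have "card J.Q2 \<le> 2 * ((n-1) div 2) * (n - 3)" by (rule J.main_bound) (simp_all add: V n50)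
  moreover have "card J.Q2 = 2 * card (Qlt (gadj G))" unfolding Qlt_def by (rule J.card_Q2_Qlt)
  moreover have "count_sub paw G = card (Qlt (gadj G))" by (rule count_paw[OF sg])
  ultimately show ?thesis by simp
qed

theorem theorem3p11:
  shows "\<exists>n0::nat. \<forall>n\<ge>n0.
    ex_gen n paw C4 = count_sub paw (friendship n) \<and>
    int (count_sub paw (friendship n)) =
      (if odd n then int (n choose 2) - 3 * (int n - 1) div 2
       else int (n choose 2) - 2 * int n + 3)"
proof (intro exI[of _ 50] allI impI conjI)
  fix n :: nat assume n: "n \<ge> 50"
  define A where "A = {count_sub paw G | G. G \<in> graphs_on n \<and> free C4 G}"
  have cnt: "count_sub paw (friendship n) = ((n-1) div 2) * (n - 3)" using n by (intro fr_count) simp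
  have mem: "count_sub paw (friendship n) \<in> A" unfolding A_def using fr_graphs_on fr_free by blast
  have ub: "y \<le> count_sub paw (friendship n)" if "y \<in> A" for y
    using that gen_bound n cnt unfolding A_def by auto
  have "finite A" using ub by (meson finite_atMost finite_subset subsetI atMost_iff)
  then have "Max A = count_sub paw (friendship n)" using ub mem by (intro Max_eqI)
  thus "ex_gen n paw C4 = count_sub paw (friendship n)" unfolding ex_gen_def A_def by simp
  show "int (count_sub paw (friendship n)) =
      (if odd n then int (n choose 2) - 3 * (int n - 1) div 2
       else int (n choose 2) - 2 * int n + 3)"
    unfolding cnt using n by (intro formula) simp
qed

end
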